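(* Let $m\in[\frac n4..\frac n2-1]$ be an integer and $\delta\in(0,2)$. Let $x$ be a random bit string in $\{0,1\}^n$ such that $\mathrm{DLB}(x)=2m$ and such that the bits $x_i$, $i\in[2m+3..n]$, are mutually independent, independent of the other bits, and uniformly distributed in $\{0,1\}$. Let $y$ be generated from $x$ by a unary unbiased variation operator $V$, and let $Y=(\mathrm{HLB}_\delta(y)-\mathrm{HLB}_\delta(x))\mathbb{1}_{\mathrm{DLB}(y)\ge\mathrm{DLB}(x)}$. Then $E[Y]\le\frac{2\delta}{n}$.
   Context: Let $n$ be an even positive integer. For $x\in\{0,1\}^n$ consider the blocks $(x_{2\ell+1},x_{2\ell+2})$, $\ell=0,\dots,\frac n2-1$. If $x\neq(1,\dots,1)$, let $m$ be the smallest $\ell$ with $x_{2\ell+1}\neq 1$ or $x_{2\ell+2}\neq 1$, and define $\mathrm{DLB}(x)=2m+1$ if $x_{2m+1}+x_{2m+2}=0$ and $\mathrm{DLB}(x)=2m$ if $x_{2m+1}+x_{2m+2}=1$; set $\mathrm{DLB}(1,\dots,1)=n$. For $\delta\in(0,2)$, $\mathrm{HLB}_\delta(x)=2m$ if $\mathrm{DLB}(x)=2m+1$, $\mathrm{HLB}_\delta(x)=2m+2-\delta$ if $\mathrm{DLB}(x)=2m$ (for $m\in\{0,\dots,\frac n2-1\}$), and $\mathrm{HLB}_\delta(x)=n$ if $\mathrm{DLB}(x)=n$. A unary unbiased variation operator $V$ assigns to each $x\in\{0,1\}^n$ a probability distribution $V(x)$ on $\{0,1\}^n$ such that for all $x,y,z$,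 $\Pr[y=V(x)]=\Pr[y\oplus z=V(x\oplus z)]$, and for all permutations $\sigma$ of $[1..n]$, $\Pr[y=V(x)]=\Pr[\sigma(y)=V(\sigma(x))]$, where $\sigma(x)=(x_{\sigma(1)},\dots,x_{\sigma(n)})$. *)

theory Defs
  imports "HOL-Probability.Probability" "HOL-Combinatorics.Permutations"
begin

text \<open>Bit strings in {0,1}^n are represented as bool lists of length n;
  the paper's bit x_i (1-based) is x ! (i - 1). True = 1, False = 0.\<close>

definition block_full :: "bool list \<Rightarrow> nat \<Rightarrow> bool" where
  "block_full x l \<longleftrightarrow> x ! (2*l) \<and> x ! (2*l+1)"

definition DLB :: "bool list \<Rightarrow> nat" where
  "DLB x = (let n = length x in
     if \<forall>l < n div 2. block_full x l then n
     else (let m = (LEAST l. l < n div 2 \<and> \<not> block_full x l) in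
           if \<not> x ! (2*m) \<and> \<not> x ! (2*m+1) then 2*m+1 else 2*m))"

definition HLB :: "real \<Rightarrow> bool list \<Rightarrow> real" where
  "HLB \<delta> x = (let d = DLB x in
     if d = length x then real (length x)
     else if odd d then real (d - 1)
     else real d + 2 - \<delta>)"

definition xor_bits :: "bool list \<Rightarrow> bool list \<Rightarrow> bool list" where
  "xor_bits x z = map2 (\<noteq>) x z"

definition perm_bits :: "(nat \<Rightarrow> nat) \<Rightarrow> bool list \<Rightarrow> bool list" where
  "perm_bits \<sigma> x = map (\<lambda>i. x ! \<sigma> i) [0..<length x]"

definition unary_unbiased :: "nat \<Rightarrow> (bool list \<Rightarrow> bool list pmf) \<Rightarrow> bool" where
  "unary_unbiased n V \<longleftrightarrow>
     (\<forall>x. length x = n \<longrightarrow> set_pmf (V x) \<subseteq> {y. length y = n}) \<and>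
     (\<forall>x y z. length x = n \<and> length y = n \<and> length z = n \<longrightarrow>
        pmf (V x) y = pmf (V (xor_bits x z)) (xor_bits y z)) \<and>
     (\<forall>\<sigma> x y. \<sigma> permutes {..<n} \<and> length x = n \<and> length y = n \<longrightarrow>
        pmf (V x) y = pmf (V (perm_bits \<sigma> x)) (perm_bits \<sigma> y))"

end

theory Submission
  imports Defs
begin


lemma block_full_Cons2: "block_full (a#b#t) (Suc l) = block_full t l"
  by (simp add: block_full_def)

lemma DLB_Nil: "DLB [] = 0" by (simp add: DLB_def)

lemma DLB_full: "(\<forall>l<length x div 2. block_full x l) \<Longrightarrow> DLB x = length x"
  unfolding DLB_def Let_def by (rule if_P)

lemma DLB_nfull: "\<not>(\<forall>l<length x div 2. block_full x l) \<Longrightarrow> DLB x = (let m = (LEAST l. l < length x div 2 \<and> \<not> block_full x l) in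
           if \<not> x ! (2*m) \<and> \<not> x ! (2*m+1) then 2*m+1 else 2*m)"
  unfolding DLB_def Let_def by (rule if_not_P)

lemma DLB_Cons2: "DLB (a#b#t) = (if a \<and> b then 2 + DLB t else if \<not>a \<and> \<not>b then 1 else 0)"
proof (cases "a \<and> b")
  case True
  have bf0: "block_full (a#b#t) 0" using True by (simp add: block_full_def)
  have all: "(\<forall>l < length (a#b#t) div 2. block_full (a#b#t) l) = (\<forall>l < length t div 2. block_full t l)"
    using bf0 by (auto simp: block_full_Cons2 less_Suc_eq_0_disj)
  show ?thesis
  proof (cases "\<forall>l < length t div 2. block_full t l")
    case True2: True
    have e1: "DLB (a#b#t) = length (a#b#t)" using all True2 by (intro DLB_full) blast
    have e2: "DLB t = length t" using True2 by (intro DLB_full) blast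
    have "DLB (a#b#t) = 2 + DLB t" unfolding e1 e2 by simp
    then show ?thesis using True by simp
  next
    case False2: False
    then obtain l0 where l0: "l0 < length t div 2" "\<not> block_full t l0" by auto
    define L where "L = (LEAST l. l < length t div 2 \<and> \<not> block_full t l)"
    have LL: "(LEAST l. l < length (a#b#t) div 2 \<and> \<not> block_full (a#b#t) l) = Suc L"
      unfolding L_def
      apply (subst Least_Suc[of _ "Suc l0"])
      using l0 bf0 by (auto simp: block_full_Cons2)
    have nf: "\<not> (\<forall>l < length (a#b#t) div 2. block_full (a#b#t) l)" using all False2 by blast
    have i1: "(a#b#t) ! (2 * Suc L) = t ! (2*L)" by simp
    have i2: "(a#b#t) ! (2 * Suc L + 1) = t ! (2*L+1)" by simp
    have d1: "DLB (a#b#t) = (if \<not> t ! (2*L) \<and> \<not> t ! (2*L+1) then 2*Suc L+1 else 2*Suc L)"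
      unfolding DLB_nfull[OF nf] Let_def LL i1 i2 by (rule refl)
    have d2: "DLB t = (if \<not> t ! (2*L) \<and> \<not> t ! (2*L+1) then 2*L+1 else 2*L)"
      using DLB_nfull[OF False2] unfolding L_def Let_def by simp
    have "DLB (a#b#t) = 2 + DLB t" unfolding d1 d2 by simp
    then show ?thesis using True by simp
  qed
next
  case False
  have bf0: "\<not> block_full (a#b#t) 0" using False by (simp add: block_full_def)
  have L0: "(LEAST l. l < length (a#b#t) div 2 \<and> \<not> block_full (a#b#t) l) = 0"
    by (rule Least_equality) (use bf0 in auto)
  have nf: "\<not> (\<forall>l < length (a#b#t) div 2. block_full (a#b#t) l)" using bf0 by auto
  have "DLB (a#b#t) = (if \<not> a \<and> \<not> b then 1 else 0)"
    unfolding DLB_nfull[OF nf] Let_def L0 by simp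
  then show ?thesis using False by simp
qed

lemma HLB_Nil: "HLB \<delta> [] = 0" by (simp add: HLB_def DLB_Nil)

lemma DLB_le: "even (length x) \<Longrightarrow> DLB x \<le> length x"
proof (induction x rule: induct_list012)
  case 1 then show ?case by (simp add: DLB_Nil)
next
  case (2 x) then show ?case by simp
next
  case (3 a b t) then show ?case by (simp add: DLB_Cons2)
qed

lemma HLB_Cons2: "even (length t) \<Longrightarrow>
  HLB \<delta> (a#b#t) = (if a \<and> b then 2 + HLB \<delta> t else if \<not>a \<and> \<not>b then 0 else 2 - \<delta>)"
  using DLB_le[of t] odd_pos[of "DLB t"]
  by (cases "DLB t = length t"; cases "odd (DLB t)") (auto simp: HLB_def Let_def DLB_Cons2 of_nat_diff)

lemma DLB_rep: "DLB (replicate (2*j) True @ w) = 2*j + DLB w"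
  by (induction j) (auto simp: DLB_Cons2 numeral_2_eq_2)

lemma HLB_rep: "even (length w) \<Longrightarrow> HLB \<delta> (replicate (2*j) True @ w) = 2*j + HLB \<delta> w"
proof (induction j)
  case 0 then show ?case by simp
next
  case (Suc j)
  have e: "even (length (replicate (2*j) True @ w))" using Suc.prems by simp
  have "replicate (2*Suc j) True @ w = True # True # (replicate (2*j) True @ w)"
    by (simp add: numeral_2_eq_2)
  then show ?case using HLB_Cons2[OF e, of \<delta> True True] Suc by simp
qed

lemma nth_Cons2: "i \<ge> 2 \<Longrightarrow> (a#b#t) ! i = t ! (i-2)"
  by (cases i; cases "i - 1") auto

lemma DLB_false_lt: "even (length w) \<Longrightarrow> i < length w \<Longrightarrow> \<not> w ! i \<Longrightarrow> DLB (w @ r) < length w"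
proof (induction w arbitrary: i rule: induct_list012)
  case 1 then show ?case by simp
next
  case (2 x) then show ?case by simp
next
  case (3 a b t)
  show ?case
  proof (cases "a \<and> b")
    case True
    then have "i \<ge> 2" using 3 by (cases i; cases "i - 1") auto
    moreover have "even (length t)" using "3.prems" by simp
    moreover have "\<not> t ! (i-2)" using "3.prems" \<open>i \<ge> 2\<close> by (simp add: nth_Cons2 numeral_2_eq_2)
    ultimately have "DLB (t @ r) < length t" using "3.prems" by (intro "3.IH"(1)[of "i-2"]) auto
    then show ?thesis using True by (simp add: DLB_Cons2)
  qed (auto simp: DLB_Cons2)
qed

lemma DLB_shape: "even (length x) \<Longrightarrow> DLB x = 2*j \<Longrightarrow> 2*j < length x \<Longrightarrow>
   (\<forall>i<2*j. x ! i) \<and> x ! (2*j) \<noteq> x ! (2*j+1)"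
proof (induction j arbitrary: x)
  case 0
  then obtain a b t where x: "x = a#b#t" by (cases x rule: remdups_adj.cases) auto
  show ?case using 0 unfolding x by (auto simp: DLB_Cons2 split: if_splits)
next
  case (Suc j)
  then obtain a b t where x: "x = a#b#t" by (cases x rule: remdups_adj.cases) auto
  have ab: "a \<and> b" using Suc.prems unfolding x by (auto simp: DLB_Cons2 split: if_splits)
  then have "DLB t = 2*j" using Suc.prems unfolding x by (simp add: DLB_Cons2)
  then have IH: "(\<forall>i<2*j. t ! i) \<and> t ! (2*j) \<noteq> t ! (2*j+1)" using Suc.prems unfolding x
    by (intro Suc.IH) auto
  have A: "\<forall>i<2*Suc j. x ! i"
  proof (intro allI impI)
    fix i assume "i < 2 * Suc j"
    then show "x ! i" using IH ab unfolding x by (cases i; cases "i - 1") (auto simp: nth_Cons')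
  qed
  show ?case using A IH unfolding x by simp
qed



definition Ls :: "nat \<Rightarrow> bool list set" where "Ls k = {xs. length xs = k}"

lemma finite_Ls[simp]: "finite (Ls k)"
proof -
  have "Ls k = {xs. set xs \<subseteq> UNIV \<and> length xs = k}" by (auto simp: Ls_def)
  then show ?thesis using finite_lists_length_eq[of "UNIV :: bool set" k] by simp
qed

lemma sum_split: "(\<Sum>x\<in>Ls (j+k). f x) = (\<Sum>u\<in>Ls j. \<Sum>v\<in>Ls k. f (u@v))"
proof -
  have inj: "inj_on (\<lambda>(u,v). u@v) (Ls j \<times> Ls k)"
    by (auto simp: inj_on_def Ls_def)
  have img: "(\<lambda>(u,v). u@v) ` (Ls j \<times> Ls k) = Ls (j+k)"
  proof
    show "(\<lambda>(u,v). u@v) ` (Ls j \<times> Ls k) \<subseteq> Ls (j+k)" by (auto simp: Ls_def)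
  next
    show "Ls (j+k) \<subseteq> (\<lambda>(u,v). u@v) ` (Ls j \<times> Ls k)"
    proof
      fix x assume "x \<in> Ls (j+k)"
      then have "(take j x, drop j x) \<in> Ls j \<times> Ls k" "x = (\<lambda>(u,v). u@v) (take j x, drop j x)"
        by (auto simp: Ls_def)
      then show "x \<in> (\<lambda>(u,v). u@v) ` (Ls j \<times> Ls k)" by blast
    qed
  qed
  have "(\<Sum>u\<in>Ls j. \<Sum>v\<in>Ls k. f (u@v)) = (\<Sum>p\<in>Ls j \<times> Ls k. f ((\<lambda>(u,v). u@v) p))"
    by (simp add: sum.cartesian_product case_prod_unfold)
  also have "\<dots> = (\<Sum>x\<in>Ls (j+k). f x)"
    using sum.reindex[OF inj, of f] img by simp
  finally show ?thesis by simp
qed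

lemma Ls2: "Ls 2 = {[True,True],[True,False],[False,True],[False,False]}"
proof -
  have "length xs = 2 \<Longrightarrow> xs \<in> {[True,True],[True,False],[False,True],[False,False]}" for xs :: "bool list"
    by (cases xs rule: remdups_adj.cases) auto
  then show ?thesis by (auto simp: Ls_def)
qed

lemma HLB_sum: assumes "0 < \<delta>" shows "(\<Sum>v\<in>Ls (2*j). HLB \<delta> v) \<le> 2 * 4^j"
proof (induction j)
  case 0
  have "Ls 0 = {[]}" by (auto simp: Ls_def)
  then show ?case by (simp add: HLB_Nil)
next
  case (Suc j)
  have "(\<Sum>v\<in>Ls (2*Suc j). HLB \<delta> v) = (\<Sum>u\<in>Ls 2. \<Sum>v\<in>Ls (2*j). HLB \<delta> (u@v))"
    using sum_split[where j=2 and k="2*j"] by simp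
  also have "\<dots> = (\<Sum>v\<in>Ls (2*j). HLB \<delta> ([True,True]@v)) + (\<Sum>v\<in>Ls (2*j). HLB \<delta> ([True,False]@v))
      + (\<Sum>v\<in>Ls (2*j). HLB \<delta> ([False,True]@v)) + (\<Sum>v\<in>Ls (2*j). HLB \<delta> ([False,False]@v))"
    unfolding Ls2 by simp
  also have "\<dots> = (\<Sum>v\<in>Ls (2*j). 2 + HLB \<delta> v) + (\<Sum>v\<in>Ls (2*j). 2 - \<delta>)
      + (\<Sum>v\<in>Ls (2*j). 2 - \<delta>) + (\<Sum>v\<in>Ls (2*j). 0)"
    by (intro arg_cong2[where f="(+)"] arg_cong2[where f="(+)"] sum.cong refl)
       (auto simp: Ls_def HLB_Cons2)
  also have "\<dots> = (\<Sum>v\<in>Ls (2*j). HLB \<delta> v) + real (card (Ls (2*j))) * (6 - 2*\<delta>)"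
    by (simp add: sum.distrib algebra_simps)
  also have "card (Ls (2*j)) = 4^j"
  proof -
    have "Ls (2*j) = {xs. set xs \<subseteq> UNIV \<and> length xs = 2*j}" by (auto simp: Ls_def)
    then have "card (Ls (2*j)) = card (UNIV::bool set) ^ (2*j)"
      using card_lists_length_eq[of "UNIV :: bool set" "2*j"] by simp
    then show ?thesis by (simp add: power_mult)
  qed
  finally have eq: "(\<Sum>v\<in>Ls (2*Suc j). HLB \<delta> v) = (\<Sum>v\<in>Ls (2*j). HLB \<delta> v) + 4^j * (6 - 2*\<delta>)" by simp
  have h: "(4::real)^j * (6 - 2*\<delta>) \<le> 4^j * 6" using assms by (intro mult_left_mono) auto
  have "(\<Sum>v\<in>Ls (2*Suc j). HLB \<delta> v) \<le> 2 * 4^j + 4^j * 6" unfolding eq using Suc h by linarith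
  then show ?case by simp
qed

lemma xor_len[simp]: "length (xor_bits v s) = min (length v) (length s)"
  by (simp add: xor_bits_def)

lemma xor_nth[simp]: "i < length v \<Longrightarrow> i < length s \<Longrightarrow> xor_bits v s ! i = (v ! i \<noteq> s ! i)"
  by (simp add: xor_bits_def)

lemma xor_xor: "length v = length s \<Longrightarrow> xor_bits (xor_bits v s) s = v"
  by (rule nth_equalityI) auto

lemma xor_append: "length u = length su \<Longrightarrow> xor_bits (u@v) (su@sv) = xor_bits u su @ xor_bits v sv"
  by (simp add: xor_bits_def)

lemma sum_xor: assumes "length s = k" shows "(\<Sum>v\<in>Ls k. f (xor_bits v s)) = (\<Sum>v\<in>Ls k. f v)"
  by (rule sum.reindex_bij_witness[where i="\<lambda>v. xor_bits v s" and j="\<lambda>v. xor_bits v s"])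
     (use assms in \<open>auto simp: Ls_def xor_xor\<close>)



lemma binom_step: "Suc j * (a choose Suc j) = (a - j) * (a choose j)"
proof (cases a)
  case 0 then show ?thesis by simp
next
  case (Suc a')
  have "Suc j * (a choose Suc j) = a * (a' choose j)" using Suc_times_binomial[of j a'] Suc by simp
  also have "\<dots> = (a - j) * (a choose j)" using binomial_absorb_comp[of a j] Suc by simp
  finally show ?thesis .
qed

lemma binom_pow: "2^j * (t choose j) \<le> (2*t+1) choose j"
proof (induction j)
  case 0 then show ?case by simp
next
  case (Suc j)
  have "Suc j * (2^Suc j * (t choose Suc j)) = 2 * 2^j * (Suc j * (t choose Suc j))"
    by (simp only: power_Suc mult_ac)
  also have "\<dots> = 2 * 2^j * ((t - j) * (t choose j))" using binom_step[of j t] by simp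
  also have "\<dots> = 2 * (t - j) * (2^j * (t choose j))" by (simp only: mult_ac)
  also have "\<dots> \<le> 2 * (t - j) * ((2*t+1) choose j)"
    using Suc.IH by (intro mult_left_mono) auto
  also have "\<dots> \<le> (2*t+1 - j) * ((2*t+1) choose j)"
    by (intro mult_right_mono) auto
  also have "\<dots> = Suc j * ((2*t+1) choose Suc j)" using binom_step[of j "2*t+1"] by simp
  finally show ?case by (simp only: Suc_mult_le_cancel1)
qed

lemma suc_le_pow2: "Suc j \<le> 2^j"
  by (induction j) auto

lemma binom_ineq:
  assumes "2*t+2 \<le> n"
  shows "n * (t choose j) \<le> n choose Suc j"
proof -
  have "Suc j * (n * (t choose j)) \<le> 2^j * (n * (t choose j))"
    by (rule mult_le_mono1[OF suc_le_pow2])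
  also have "\<dots> = n * (2^j * (t choose j))" by (simp only: mult_ac)
  also have "\<dots> \<le> n * ((2*t+1) choose j)" using binom_pow[of j t] by simp
  also have "\<dots> \<le> n * ((n-1) choose j)"
    using assms by (intro mult_left_mono binomial_right_mono) auto
  also have "\<dots> = Suc j * (n choose Suc j)"
    using Suc_times_binomial[of j "n-1"] assms by simp
  finally show ?thesis by (simp only: Suc_mult_le_cancel1)
qed



definition setof :: "bool list \<Rightarrow> nat set" where "setof s = {i. i < length s \<and> s!i}"
definition listof :: "nat \<Rightarrow> nat set \<Rightarrow> bool list" where "listof n A = map (\<lambda>i. i \<in> A) [0..<n]"

lemma length_listof[simp]: "length (listof n A) = n" by (simp add: listof_def)

lemma listof_setof: "length s = n \<Longrightarrow> listof n (setof s) = s"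
  by (rule nth_equalityI) (auto simp: listof_def setof_def)

lemma setof_listof: "A \<subseteq> {..<n} \<Longrightarrow> setof (listof n A) = A"
  by (auto simp: listof_def setof_def)

lemma setof_sub: "setof s \<subseteq> {..<length s}" by (auto simp: setof_def)

lemma sum_sets: "(\<Sum>s\<in>{s\<in>Ls n. P (setof s)}. f s) = (\<Sum>A\<in>{A. A \<subseteq> {..<n} \<and> P A}. f (listof n A))"
proof (rule sum.reindex_bij_witness[where i="listof n" and j="setof"])
  fix a assume a: "a \<in> {s\<in>Ls n. P (setof s)}"
  then show "listof n (setof a) = a" by (simp add: Ls_def listof_setof)
  show "setof a \<in> {A. A \<subseteq> {..<n} \<and> P A}" using a setof_sub[of a] by (auto simp: Ls_def)
  show "f (listof n (setof a)) = f a" using a by (simp add: Ls_def listof_setof)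
next
  fix b assume b: "b \<in> {A. A \<subseteq> {..<n} \<and> P A}"
  then show "setof (listof n b) = b" by (simp add: setof_listof)
  show "listof n b \<in> {s\<in>Ls n. P (setof s)}" using b by (simp add: setof_listof Ls_def)
qed

lemma perm_ex:
  assumes "A \<subseteq> {..<n}"
  shows "\<exists>\<sigma>. \<sigma> permutes {..<n} \<and> (\<forall>i<n. \<sigma> i \<in> A \<longleftrightarrow> i < card A)"
proof -
  define k where "k = card A"
  have fA: "finite A" using assms finite_subset by blast
  have kn: "k \<le> n" unfolding k_def using card_mono[OF _ assms] by simp
  obtain h1 where h1: "bij_betw h1 {..<k} A"
    using finite_same_card_bij[of "{..<k}" A] fA by (auto simp: k_def)
  have c2: "card ({..<n} - {..<k}) = card ({..<n} - A)"
    using kn assms fA by (simp add: card_Diff_subset k_def)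
  obtain h2 where h2: "bij_betw h2 ({..<n} - {..<k}) ({..<n} - A)"
    using finite_same_card_bij[OF _ _ c2] by auto
  have b: "bij_betw (\<lambda>x. if x \<in> {..<k} then h1 x else h2 x) ({..<k} \<union> ({..<n} - {..<k})) (A \<union> ({..<n} - A))"
    by (rule bij_betw_disjoint_Un[OF h1 h2]) auto
  define \<sigma> where "\<sigma> x = (if x < k then h1 x else if x < n then h2 x else x)" for x
  have u1: "{..<k} \<union> ({..<n} - {..<k}) = {..<n}" using kn by auto
  have u2: "A \<union> ({..<n} - A) = {..<n}" using assms by auto
  have b2: "bij_betw \<sigma> {..<n} {..<n}"
    using b unfolding u1 u2 by (rule bij_betw_cong[THEN iffD1, rotated]) (use kn in \<open>auto simp: \<sigma>_def\<close>)
  have p: "\<sigma> permutes {..<n}" by (rule bij_imp_permutes[OF b2]) (use kn in \<open>auto simp: \<sigma>_def\<close>)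
  have "\<sigma> i \<in> A \<longleftrightarrow> i < k" if "i < n" for i
  proof (cases "i < k")
    case True then show ?thesis using h1 by (auto simp: \<sigma>_def bij_betw_def)
  next
    case False
    then have "h2 i \<in> {..<n} - A" using h2 that by (auto simp: bij_betw_def)
    then show ?thesis using False that by (auto simp: \<sigma>_def)
  qed
  then show ?thesis using p unfolding k_def by blast
qed

lemma perm_bits_listof: assumes "\<sigma> permutes {..<n}" shows "perm_bits \<sigma> (listof n A) = map (\<lambda>i. \<sigma> i \<in> A) [0..<n]"
proof -
  have "\<sigma> i < n" if "i < n" for i using permutes_in_image[OF assms, of i] that by simp
  then show ?thesis by (auto simp: perm_bits_def listof_def)
qed

lemma w_card:
  assumes perm: "\<forall>\<sigma> s. \<sigma> permutes {..<n} \<and> length s = n \<longrightarrow> pmf W s = pmf W (perm_bits \<sigma> s)"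
    and A: "A \<subseteq> {..<n}"
  shows "pmf W (listof n A) = pmf W (listof n {..<card A})"
proof -
  obtain \<sigma> where s: "\<sigma> permutes {..<n}" "\<forall>i<n. \<sigma> i \<in> A \<longleftrightarrow> i < card A" using perm_ex[OF A] by blast
  have "perm_bits \<sigma> (listof n A) = listof n {..<card A}"
    unfolding perm_bits_listof[OF s(1)] using s(2) by (auto simp: listof_def)
  then show ?thesis using perm s(1) by auto
qed

lemma group_card:
  fixes f :: "nat \<Rightarrow> real"
  assumes "finite S"
  shows "(\<Sum>B\<in>Pow S. f (card B)) = (\<Sum>k\<le>card S. real (card S choose k) * f k)"
proof -
  have img: "card ` Pow S \<subseteq> {..card S}" using assms by (auto intro: card_mono)
  have "(\<Sum>B\<in>Pow S. f (card B)) = (\<Sum>k\<in>{..card S}. \<Sum>B\<in>{B\<in>Pow S. card B = k}. f (card B))"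
    using sum.group[OF _ _ img, of "\<lambda>B. f (card B)"] assms by simp
  also have "\<dots> = (\<Sum>k\<in>{..card S}. real (card {B. B \<subseteq> S \<and> card B = k}) * f k)"
    by (intro sum.cong refl) simp
  also have "\<dots> = (\<Sum>k\<le>card S. real (card S choose k) * f k)"
    using n_subsets[OF assms] by simp
  finally show ?thesis .
qed

lemma mask_total:
  assumes supp: "set_pmf W \<subseteq> Ls n"
    and perm: "\<forall>\<sigma> s. \<sigma> permutes {..<n} \<and> length s = n \<longrightarrow> pmf W s = pmf W (perm_bits \<sigma> s)"
  shows "(\<Sum>k\<le>n. real (n choose k) * pmf W (listof n {..<k})) = 1"
proof -
  have "1 = (\<Sum>s\<in>Ls n. pmf W s)" using sum_pmf_eq_1[OF finite_Ls supp] by simp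
  also have "\<dots> = (\<Sum>s\<in>{s\<in>Ls n. True}. pmf W s)" by simp
  also have "\<dots> = (\<Sum>A\<in>{A. A \<subseteq> {..<n} \<and> True}. pmf W (listof n A))" by (rule sum_sets)
  also have "\<dots> = (\<Sum>A\<in>Pow {..<n}. pmf W (listof n {..<card A}))"
    by (intro sum.cong) (auto intro: w_card[OF perm])
  also have "\<dots> = (\<Sum>k\<le>n. real (n choose k) * pmf W (listof n {..<k}))"
    using group_card[of "{..<n}" "\<lambda>k. pmf W (listof n {..<k})"] by simp
  finally show ?thesis by simp
qed

lemma mask_sum:
  assumes perm: "\<forall>\<sigma> s. \<sigma> permutes {..<n} \<and> length s = n \<longrightarrow> pmf W s = pmf W (perm_bits \<sigma> s)"
    and cr: "c < r" "r \<le> n"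
  shows "(\<Sum>s\<in>{s\<in>Ls n. setof s \<inter> {..<r} = {c}}. pmf W s)
       = (\<Sum>j\<le>n-r. real (n-r choose j) * pmf W (listof n {..<Suc j}))"
proof -
  have "(\<Sum>s\<in>{s\<in>Ls n. setof s \<inter> {..<r} = {c}}. pmf W s)
      = (\<Sum>A\<in>{A. A \<subseteq> {..<n} \<and> A \<inter> {..<r} = {c}}. pmf W (listof n A))" by (rule sum_sets)
  also have "\<dots> = (\<Sum>A\<in>{A. A \<subseteq> {..<n} \<and> A \<inter> {..<r} = {c}}. pmf W (listof n {..<card A}))"
    by (intro sum.cong) (auto intro: w_card[OF perm])
  also have "\<dots> = (\<Sum>B\<in>Pow {r..<n}. pmf W (listof n {..<card (insert c B)}))"
  proof (rule sum.reindex_bij_witness[where i="insert c" and j="\<lambda>A. A - {c}"])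
    fix A assume A: "A \<in> {A. A \<subseteq> {..<n} \<and> A \<inter> {..<r} = {c}}"
    then have cA: "c \<in> A" by blast
    then show "insert c (A - {c}) = A" by blast
    then show "pmf W (listof n {..<card (insert c (A - {c}))}) = pmf W (listof n {..<card A})" by simp
    show "A - {c} \<in> Pow {r..<n}"
    proof
      show "A - {c} \<subseteq> {r..<n}"
      proof
        fix x assume x: "x \<in> A - {c}"
        then have "x \<notin> {..<r}" using A by blast
        moreover have "x < n" using x A by blast
        ultimately show "x \<in> {r..<n}" by simp
      qed
    qed
  next
    fix B assume B: "B \<in> Pow {r..<n}"
    then have "c \<notin> B" using cr by auto
    then show "insert c B - {c} = B" by simp
    have "B \<inter> {..<r} = {}" using B by auto
    then show "insert c B \<in> {A. A \<subseteq> {..<n} \<and> A \<inter> {..<r} = {c}}" using B cr by auto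
  qed
  also have "\<dots> = (\<Sum>B\<in>Pow {r..<n}. pmf W (listof n {..<Suc (card B)}))"
  proof (intro sum.cong refl)
    fix B assume "B \<in> Pow {r..<n}"
    then have "finite B" "c \<notin> B" using cr finite_subset by auto
    then show "pmf W (listof n {..<card (insert c B)}) = pmf W (listof n {..<Suc (card B)})" by simp
  qed
  also have "\<dots> = (\<Sum>j\<le>n-r. real (n-r choose j) * pmf W (listof n {..<Suc j}))"
    using group_card[of "{r..<n}" "\<lambda>k. pmf W (listof n {..<Suc k})"] by simp
  finally show ?thesis .
qed

lemma mask_le:
  assumes supp: "set_pmf W \<subseteq> Ls n"
    and perm: "\<forall>\<sigma> s. \<sigma> permutes {..<n} \<and> length s = n \<longrightarrow> pmf W s = pmf W (perm_bits \<sigma> s)"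
    and r: "1 \<le> r" "2*(n-r)+2 \<le> n"
  shows "real n * (\<Sum>j\<le>n-r. real (n-r choose j) * pmf W (listof n {..<Suc j})) \<le> 1"
proof -
  let ?w = "\<lambda>k. pmf W (listof n {..<k})"
  have "real n * (\<Sum>j\<le>n-r. real (n-r choose j) * ?w (Suc j))
      = (\<Sum>j\<le>n-r. real (n * (n-r choose j)) * ?w (Suc j))"
    by (simp add: sum_distrib_left mult_ac)
  also have "\<dots> \<le> (\<Sum>j\<le>n-r. real (n choose Suc j) * ?w (Suc j))"
  proof (intro sum_mono mult_right_mono)
    fix j show "real (n * (n - r choose j)) \<le> real (n choose Suc j)"
      using binom_ineq[OF r(2), of j] by (simp only: of_nat_le_iff)
  qed simp
  also have "\<dots> = (\<Sum>k\<in>Suc ` {..n-r}. real (n choose k) * ?w k)"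
    by (simp add: sum.reindex)
  also have "\<dots> \<le> (\<Sum>k\<le>n. real (n choose k) * ?w k)"
    using r by (intro sum_mono2) auto
  also have "\<dots> = 1" by (rule mask_total[OF supp perm])
  finally show ?thesis .
qed



lemma u_shape:
  assumes lu: "length u = 2*m+2" and u1: "\<forall>i<2*m. u!i" and u2: "u!(2*m) \<noteq> u!(2*m+1)"
  shows "u = replicate (2*m) True @ [u!(2*m), \<not> u!(2*m)]"
proof (rule nth_equalityI)
  show "length u = length (replicate (2*m) True @ [u!(2*m), \<not> u!(2*m)])" using lu by simp
  fix i assume "i < length u"
  then have "i < 2*m \<or> i = 2*m \<or> i = 2*m+1" using lu by auto
  then show "u ! i = (replicate (2*m) True @ [u!(2*m), \<not> u!(2*m)]) ! i"
    using u1 u2 by (auto simp: nth_append)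
qed

lemma xor_comm: "xor_bits a b = xor_bits b a"
  by (rule nth_equalityI) auto

lemma G_eval:
  fixes u su v sv :: "bool list"
  assumes lu: "length u = 2*m+2" and u1: "\<forall>i<2*m. u!i" and u2: "u!(2*m) \<noteq> u!(2*m+1)"
    and lsu: "length su = 2*m+2" and lv: "even (length v)" "length sv = length v"
  shows "(HLB \<delta> (xor_bits su u @ xor_bits sv v) - HLB \<delta> (u@v))
          * (if DLB (xor_bits su u @ xor_bits sv v) \<ge> DLB (u@v) then 1 else 0)
   = (if (\<forall>i<2*m+2. su!i \<longleftrightarrow> i = 2*m) then (if u!(2*m) then -(2-\<delta>) else HLB \<delta> (xor_bits sv v) + \<delta>)
      else if (\<forall>i<2*m+2. su!i \<longleftrightarrow> i = 2*m+1) then (if u!(2*m+1) then -(2-\<delta>) else HLB \<delta> (xor_bits sv v) + \<delta>)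
      else 0)"
proof -
  define a where "a = u!(2*m)"
  have us: "u = replicate (2*m) True @ [a, \<not> a]" unfolding a_def by (rule u_shape[OF lu u1 u2])
  define v' where "v' = xor_bits sv v"
  have lv': "even (length v')" using lv by (simp add: v'_def)
  have uv: "u @ v = replicate (2*m) True @ (a # (\<not>a) # v)" using us by simp
  have Dx: "DLB (u@v) = 2*m" unfolding uv DLB_rep by (simp add: DLB_Cons2)
  have Hx: "HLB \<delta> (u@v) = 2*m + (2 - \<delta>)" unfolding uv using lv
    by (simp add: HLB_rep HLB_Cons2)
  define w where "w = xor_bits su u"
  have lw: "length w = 2*m+2" using lu lsu by (simp add: w_def)
  show ?thesis
  proof (cases "\<exists>i<2*m. su!i")
    case True
    then obtain i where i: "i < 2*m" "su!i" by blast
    have wi: "\<not> w!i" using i u1 lu lsu by (simp add: w_def)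
    have y: "w @ v' = take (2*m) w @ (drop (2*m) w @ v')" by simp
    have "DLB (take (2*m) w @ (drop (2*m) w @ v')) < length (take (2*m) w)"
      by (rule DLB_false_lt[of _ i]) (use i wi lw in auto)
    then have "DLB (w @ v') < 2*m" using lw by (simp only: y length_take)
    then have lhs: "(HLB \<delta> (w @ v') - HLB \<delta> (u@v)) * (if DLB (w @ v') \<ge> DLB (u@v) then 1 else 0) = 0"
      using Dx by simp
    have n1: "\<not> (\<forall>i<2*m+2. su!i \<longleftrightarrow> i = 2*m)"
    proof
      assume "\<forall>i<2*m+2. su!i \<longleftrightarrow> i = 2*m"
      then have "su!i \<longleftrightarrow> i = 2*m" using i(1) by simp
      then show False using i by simp
    qed
    have n2: "\<not> (\<forall>i<2*m+2. su!i \<longleftrightarrow> i = 2*m+1)"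
    proof
      assume "\<forall>i<2*m+2. su!i \<longleftrightarrow> i = 2*m+1"
      then have "su!i \<longleftrightarrow> i = 2*m+1" using i(1) by simp
      then show False using i by simp
    qed
    show ?thesis unfolding if_not_P[OF n1] if_not_P[OF n2] using lhs[unfolded w_def v'_def] .
  next
    case False
    define e where "e = su!(2*m)"
    define f where "f = su!(2*m+1)"
    have ws: "w = replicate (2*m) True @ [e \<noteq> a, f \<noteq> (\<not>a)]"
    proof (rule nth_equalityI)
      show "length w = length (replicate (2*m) True @ [e \<noteq> a, f \<noteq> (\<not>a)])" using lw by simp
      fix i assume "i < length w"
      then have "i < 2*m \<or> i = 2*m \<or> i = 2*m+1" using lw by auto
      then show "w ! i = (replicate (2*m) True @ [e \<noteq> a, f \<noteq> (\<not>a)]) ! i"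
        using False u1 u2 lu lsu unfolding w_def e_def f_def a_def
        by (auto simp: nth_append)
    qed
    have y: "w @ v' = replicate (2*m) True @ ((e \<noteq> a) # (f \<noteq> (\<not>a)) # v')" using ws by simp
    have Dy: "DLB (w @ v') = 2*m + DLB ((e \<noteq> a) # (f \<noteq> (\<not>a)) # v')" unfolding y DLB_rep ..
    have Hy: "HLB \<delta> (w @ v') = 2*m + HLB \<delta> ((e \<noteq> a) # (f \<noteq> (\<not>a)) # v')"
      unfolding y using lv' by (simp add: HLB_rep)
    have c1: "(\<forall>i<2*m+2. su!i \<longleftrightarrow> i = 2*m) \<longleftrightarrow> e \<and> \<not> f"
    proof
      assume "\<forall>i<2*m+2. su!i \<longleftrightarrow> i = 2*m" then show "e \<and> \<not> f" unfolding e_def f_def by auto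
    next
      assume "e \<and> \<not> f"
      then show "\<forall>i<2*m+2. su!i \<longleftrightarrow> i = 2*m" using False unfolding e_def f_def
        by (auto simp: less_Suc_eq)
    qed
    have c2: "(\<forall>i<2*m+2. su!i \<longleftrightarrow> i = 2*m+1) \<longleftrightarrow> \<not> e \<and> f"
    proof
      assume "\<forall>i<2*m+2. su!i \<longleftrightarrow> i = 2*m+1" then show "\<not> e \<and> f" unfolding e_def f_def by auto
    next
      assume "\<not> e \<and> f"
      then show "\<forall>i<2*m+2. su!i \<longleftrightarrow> i = 2*m+1" using False unfolding e_def f_def
        by (auto simp: less_Suc_eq)
    qed
    have ua: "u!(2*m) = a" "u!(2*m+1) = (\<not>a)" using u2 a_def by auto
    show ?thesis
      unfolding w_def[symmetric] v'_def[symmetric] c1 c2 ua Dy Hy Dx Hx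
      using lv' by (cases a; cases e; cases f) (simp_all add: DLB_Cons2 HLB_Cons2)
  qed
qed

lemma card_Ls: "card (Ls k) = 2^k"
proof -
  have "Ls k = {xs. set xs \<subseteq> UNIV \<and> length xs = k}" by (auto simp: Ls_def)
  then show ?thesis using card_lists_length_eq[of "UNIV :: bool set" k] by simp
qed

lemma hsum:
  assumes "0 < \<delta>" "even t" "length sv = t"
  shows "(\<Sum>v\<in>Ls t. HLB \<delta> (xor_bits sv v) + \<delta>) \<le> 2^t * (2 + \<delta>)"
proof -
  obtain j where t: "t = 2*j" using assms(2) by blast
  have "(\<Sum>v\<in>Ls t. HLB \<delta> (xor_bits sv v)) = (\<Sum>v\<in>Ls t. HLB \<delta> (xor_bits v sv))"
    by (simp add: xor_comm)
  also have "\<dots> = (\<Sum>v\<in>Ls t. HLB \<delta> v)" by (rule sum_xor[OF assms(3)])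
  also have "\<dots> \<le> 2 * 4^j" unfolding t by (rule HLB_sum[OF assms(1)])
  also have "\<dots> = 2 * 2^t" by (simp add: t power_mult)
  finally have "(\<Sum>v\<in>Ls t. HLB \<delta> (xor_bits sv v)) \<le> 2 * 2^t" .
  then show ?thesis by (simp add: sum.distrib card_Ls algebra_simps)
qed

lemma sum_if_bound:
  fixes h :: "'a \<Rightarrow> real"
  assumes "(\<Sum>v\<in>S. h v) \<le> B"
  shows "(\<Sum>v\<in>S. if P then (if U0 then c else h v) else if Q then (if U1 then c else h v) else 0)
     \<le> (if P then (if U0 then real (card S) * c else B) else if Q then (if U1 then real (card S) * c else B) else 0)"
  using assms by (cases P; cases Q; cases U0; cases U1) simp_all

lemma if_mult_out:
  "(if P then (if U0 then (K::real) * c else K*b) else if Q then (if U1 then K*c else K*b) else 0)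
   = K * (if P then (if U0 then c else b) else if Q then (if U1 then c else b) else 0)"
  by (cases P; cases Q; cases U0; cases U1) simp_all

lemma vsum_bound:
  fixes u su sv :: "bool list"
  assumes lu: "length u = 2*m+2" and u1: "\<forall>i<2*m. u!i" and u2: "u!(2*m) \<noteq> u!(2*m+1)"
    and lsu: "length su = 2*m+2" and t: "even t" "length sv = t" and d: "0 < \<delta>"
  shows "(\<Sum>v\<in>Ls t. (HLB \<delta> (xor_bits su u @ xor_bits sv v) - HLB \<delta> (u@v))
          * (if DLB (xor_bits su u @ xor_bits sv v) \<ge> DLB (u@v) then 1 else 0))
   \<le> 2^t * (if (\<forall>i<2*m+2. su!i \<longleftrightarrow> i = 2*m) then (if u!(2*m) then -(2-\<delta>) else 2 + \<delta>)
      else if (\<forall>i<2*m+2. su!i \<longleftrightarrow> i = 2*m+1) then (if u!(2*m+1) then -(2-\<delta>) else 2 + \<delta>)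
      else 0)"
proof -
  let ?A0 = "\<forall>i<2*m+2. su!i \<longleftrightarrow> i = 2*m"
  let ?A1 = "\<forall>i<2*m+2. su!i \<longleftrightarrow> i = 2*m+1"
  have "(\<Sum>v\<in>Ls t. (HLB \<delta> (xor_bits su u @ xor_bits sv v) - HLB \<delta> (u@v))
          * (if DLB (xor_bits su u @ xor_bits sv v) \<ge> DLB (u@v) then 1 else 0))
      = (\<Sum>v\<in>Ls t. if ?A0 then (if u!(2*m) then -(2-\<delta>) else HLB \<delta> (xor_bits sv v) + \<delta>)
      else if ?A1 then (if u!(2*m+1) then -(2-\<delta>) else HLB \<delta> (xor_bits sv v) + \<delta>)
      else 0)"
    by (intro sum.cong refl G_eval[OF lu u1 u2 lsu]) (use t in \<open>auto simp: Ls_def\<close>)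
  also have "\<dots> \<le> 2^t * (if ?A0 then (if u!(2*m) then -(2-\<delta>) else 2 + \<delta>)
      else if ?A1 then (if u!(2*m+1) then -(2-\<delta>) else 2 + \<delta>)
      else 0)"
  proof -
    have "(\<Sum>v\<in>Ls t. if ?A0 then (if u!(2*m) then -(2-\<delta>) else HLB \<delta> (xor_bits sv v) + \<delta>)
      else if ?A1 then (if u!(2*m+1) then -(2-\<delta>) else HLB \<delta> (xor_bits sv v) + \<delta>)
      else 0) \<le> (if ?A0 then (if u!(2*m) then real (card (Ls t)) * (-(2-\<delta>)) else 2^t * (2 + \<delta>))
      else if ?A1 then (if u!(2*m+1) then real (card (Ls t)) * (-(2-\<delta>)) else 2^t * (2 + \<delta>))
      else 0)"
      by (rule sum_if_bound[OF hsum[OF d t]])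
    also have "\<dots> = 2^t * (if ?A0 then (if u!(2*m) then -(2-\<delta>) else 2 + \<delta>)
      else if ?A1 then (if u!(2*m+1) then -(2-\<delta>) else 2 + \<delta>)
      else 0)" unfolding card_Ls of_nat_power of_nat_numeral by (rule if_mult_out)
    finally show ?thesis .
  qed
  finally show ?thesis .
qed



lemma mult_if01: "(a::real) * (if P then 1 else 0) = (if P then a else 0)" by simp

lemma split3: "\<not>(P \<and> Q) \<Longrightarrow> (w::real) * (if P then a else if Q then b else 0)
   = a * (w * (if P then 1 else 0)) + b * (w * (if Q then 1 else 0))"
  by (cases P; cases Q) auto

lemma setof_cond:
  assumes "length s = n" "c < r" "r \<le> n"
  shows "(setof s \<inter> {..<r} = {c}) \<longleftrightarrow> (\<forall>i<r. s!i \<longleftrightarrow> i = c)"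
proof
  assume h: "setof s \<inter> {..<r} = {c}"
  show "\<forall>i<r. s!i \<longleftrightarrow> i = c"
  proof (intro allI impI)
    fix i assume i: "i < r"
    have "s!i \<longleftrightarrow> i \<in> setof s \<inter> {..<r}" using i assms by (auto simp: setof_def)
    then show "s!i \<longleftrightarrow> i = c" using h by simp
  qed
next
  assume h: "\<forall>i<r. s!i \<longleftrightarrow> i = c"
  show "setof s \<inter> {..<r} = {c}"
    using h assms by (auto simp: setof_def)
qed

lemma pmf_bind_pair:
  "pmf (bind_pmf X (\<lambda>x. map_pmf (\<lambda>y. (x, y)) (V x))) (x, y) = pmf X x * pmf (V x) y"
proof -
  have "pmf (bind_pmf X (\<lambda>x. map_pmf (\<lambda>y. (x, y)) (V x))) (x, y)
      = (\<integral>x'. pmf (map_pmf (\<lambda>y. (x', y)) (V x')) (x, y) \<partial>measure_pmf X)" by (rule pmf_bind)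
  also have "\<dots> = (\<Sum>x'\<in>{x}. pmf (map_pmf (\<lambda>y. (x', y)) (V x')) (x, y) * pmf X x')"
  proof (rule integral_measure_pmf_real)
    fix x' assume "pmf (map_pmf (\<lambda>y. (x', y)) (V x')) (x, y) \<noteq> 0"
    then have "(x, y) \<in> set_pmf (map_pmf (\<lambda>y. (x', y)) (V x'))" by (simp add: pmf_eq_0_set_pmf)
    then show "x' \<in> {x}" by auto
  qed simp
  also have "\<dots> = pmf (V x) y * pmf X x"
  proof -
    have "inj (\<lambda>y. (x, y))" by (auto simp: inj_def)
    then have "pmf (map_pmf (Pair x) (V x)) (x, y) = pmf (V x) y" by (metis pmf_map_inj')
    then show ?thesis by simp
  qed
  finally show ?thesis by simp
qed

theorem lemma7:
  fixes n m :: nat and \<delta> :: real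
    and X :: "bool list pmf" and V :: "bool list \<Rightarrow> bool list pmf"
  assumes "even n" and "n > 0"
    and "real n / 4 \<le> real m" and "m + 1 \<le> n div 2"
    and "0 < \<delta>" and "\<delta> < 2"
    and "set_pmf X \<subseteq> {x. length x = n \<and> DLB x = 2*m}"
    and "\<forall>z. length z = n \<longrightarrow>
           pmf X z = measure_pmf.prob X {x. take (2*m+2) x = take (2*m+2) z}
                     / 2 ^ (n - (2*m+2))"
    and "unary_unbiased n V"
  shows "measure_pmf.expectation (bind_pmf X (\<lambda>x. map_pmf (\<lambda>y. (x, y)) (V x)))
           (\<lambda>(x, y). (HLB \<delta> y - HLB \<delta> x) * (if DLB y \<ge> DLB x then 1 else 0))
         \<le> 2 * \<delta> / real n"
proof -
  note ev = assms(1) and npos = assms(2) and m4 = assms(3) and mn = assms(4)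
    and d0 = assms(5) and d2 = assms(6) and supp = assms(7) and unif = assms(8) and uu = assms(9)
  define k0 where "k0 = 2*m+2"
  define t where "t = n - k0"
  have k0n: "k0 \<le> n" using mn ev unfolding k0_def by auto
  have nk: "n = k0 + t" using k0n unfolding t_def by simp
  have et: "even t" using ev unfolding t_def k0_def by auto
  have m4': "n \<le> 4*m" using m4 by linarith
  define W where "W = V (replicate n False)"
  have Vsupp: "\<And>x. length x = n \<Longrightarrow> set_pmf (V x) \<subseteq> Ls n"
    using uu unfolding unary_unbiased_def Ls_def by blast
  have Wsupp: "set_pmf W \<subseteq> Ls n" unfolding W_def by (rule Vsupp) simp
  have VW: "pmf (V x) y = pmf W (xor_bits y x)" if "length x = n" "length y = n" for x y
  proof -
    have "xor_bits x x = replicate n False" using that by (intro nth_equalityI) auto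
    moreover have "pmf (V x) y = pmf (V (xor_bits x x)) (xor_bits y x)"
      using uu that unfolding unary_unbiased_def by blast
    ultimately show ?thesis unfolding W_def by simp
  qed
  have Wperm: "\<forall>\<sigma> s. \<sigma> permutes {..<n} \<and> length s = n \<longrightarrow> pmf W s = pmf W (perm_bits \<sigma> s)"
  proof (intro allI impI)
    fix \<sigma> :: "nat \<Rightarrow> nat" and s :: "bool list" assume h: "\<sigma> permutes {..<n} \<and> length s = n"
    have "\<sigma> i < n" if "i < n" for i using permutes_in_image[of \<sigma> "{..<n}" i] h that by simp
    then have "perm_bits \<sigma> (replicate n False) = replicate n False"
      by (intro nth_equalityI) (auto simp: perm_bits_def)
    moreover have "pmf (V (replicate n False)) s = pmf (V (perm_bits \<sigma> (replicate n False))) (perm_bits \<sigma> s)"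
      using uu h unfolding unary_unbiased_def by simp
    ultimately show "pmf W s = pmf W (perm_bits \<sigma> s)" unfolding W_def by simp
  qed
  define G where "G x y = (HLB \<delta> y - HLB \<delta> x) * (if DLB y \<ge> DLB x then 1 else 0)" for x y
  define Q where "Q u = measure_pmf.prob X {x. take k0 x = u}" for u
  have pXuv: "pmf X (u@v) = Q u / 2^t" if "u \<in> Ls k0" "v \<in> Ls t" for u v
    using unif[rule_format, of "u@v"] that nk unfolding Q_def Ls_def k0_def[symmetric] t_def[symmetric]
    by simp
  have good: "(\<forall>i<2*m. u!i) \<and> u!(2*m) \<noteq> u!(2*m+1)" if uL: "u \<in> Ls k0" and qu: "Q u \<noteq> 0" for u
  proof -
    obtain x where x: "x \<in> set_pmf X" "take k0 x = u"
      using qu measure_pmf_zero_iff[of X "{x. take k0 x = u}"] unfolding Q_def by blast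
    have lx: "length x = n" "DLB x = 2*m" using supp x(1) by auto
    have sh: "(\<forall>i<2*m. x ! i) \<and> x ! (2*m) \<noteq> x ! (2*m+1)"
      using DLB_shape[of x m] ev lx k0n by (simp add: k0_def)
    have "u ! i = x ! i" if "i < k0" for i using x(2) that by auto
    then show ?thesis using sh unfolding k0_def by auto
  qed
  have sumQ: "(\<Sum>u\<in>Ls k0. Q u) = 1"
  proof -
    have "(\<Sum>u\<in>Ls k0. Q u) = (\<Sum>u\<in>Ls k0. \<Sum>v\<in>Ls t. pmf X (u@v))"
    proof (rule sum.cong[OF refl])
      fix u assume u: "u \<in> Ls k0"
      have "(\<Sum>v\<in>Ls t. pmf X (u@v)) = (\<Sum>v\<in>Ls t. Q u / 2^t)" using pXuv[OF u] by simp
      also have "\<dots> = Q u" by (simp add: card_Ls)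
      finally show "Q u = (\<Sum>v\<in>Ls t. pmf X (u@v))" by simp
    qed
    also have "\<dots> = (\<Sum>x\<in>Ls (k0+t). pmf X x)" by (rule sum_split[symmetric])
    also have "\<dots> = 1" unfolding nk[symmetric] by (rule sum_pmf_eq_1[OF finite_Ls]) (use supp in \<open>auto simp: Ls_def\<close>)
    finally show ?thesis .
  qed
  define Pm where "Pm = (\<Sum>j\<le>n-k0. real (n-k0 choose j) * pmf W (listof n {..<Suc j}))"
  have Pm_le: "real n * Pm \<le> 1"
    unfolding Pm_def using m4' k0n by (intro mask_le[OF Wsupp Wperm]) (auto simp: k0_def)
  define \<phi> where "\<phi> u s = (if (\<forall>i<k0. s!i \<longleftrightarrow> i = 2*m) then (if u!(2*m) then -(2-\<delta>) else 2 + \<delta>)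
      else if (\<forall>i<k0. s!i \<longleftrightarrow> i = 2*m+1) then (if u!(2*m+1) then -(2-\<delta>) else 2 + \<delta>)
      else 0)" for u s :: "bool list"
  have E1: "measure_pmf.expectation (bind_pmf X (\<lambda>x. map_pmf (\<lambda>y. (x, y)) (V x)))
           (\<lambda>(x, y). (HLB \<delta> y - HLB \<delta> x) * (if DLB y \<ge> DLB x then 1 else 0))
      = (\<Sum>s\<in>Ls n. pmf W s * (\<Sum>x\<in>Ls n. pmf X x * G x (xor_bits s x)))"
  proof -
    let ?M = "bind_pmf X (\<lambda>x. map_pmf (\<lambda>y. (x, y)) (V x))"
    let ?F = "\<lambda>(x, y). (HLB \<delta> y - HLB \<delta> x) * (if DLB y \<ge> DLB x then 1 else 0)"
    have "measure_pmf.expectation ?M ?F = (\<Sum>p\<in>Ls n \<times> Ls n. ?F p * pmf ?M p)"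
    proof (rule integral_measure_pmf_real)
      fix p assume "p \<in> set_pmf ?M"
      then obtain x y where p: "p = (x, y)" "x \<in> set_pmf X" "y \<in> set_pmf (V x)" by auto
      have "length x = n" using supp p(2) by auto
      then show "p \<in> Ls n \<times> Ls n" using p Vsupp[of x] by (auto simp: Ls_def)
    qed simp
    also have "\<dots> = (\<Sum>x\<in>Ls n. \<Sum>y\<in>Ls n. G x y * (pmf X x * pmf (V x) y))"
    proof -
      have "(\<Sum>p\<in>Ls n \<times> Ls n. ?F p * pmf ?M p) = (\<Sum>p\<in>Ls n \<times> Ls n. (\<lambda>x y. G x y * (pmf X x * pmf (V x) y)) (fst p) (snd p))"
        by (intro sum.cong refl) (auto simp: pmf_bind_pair G_def)
      also have "\<dots> = (\<Sum>x\<in>Ls n. \<Sum>y\<in>Ls n. G x y * (pmf X x * pmf (V x) y))"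
        by (simp add: sum.cartesian_product')
      finally show ?thesis .
    qed
    also have "\<dots> = (\<Sum>x\<in>Ls n. \<Sum>y\<in>Ls n. pmf X x * (pmf W (xor_bits y x) * G x y))"
      by (intro sum.cong refl) (simp add: VW Ls_def mult_ac)
    also have "\<dots> = (\<Sum>x\<in>Ls n. \<Sum>s\<in>Ls n. pmf X x * (pmf W s * G x (xor_bits s x)))"
    proof (rule sum.cong[OF refl])
      fix x assume x: "x \<in> Ls n"
      let ?f = "\<lambda>y. pmf X x * (pmf W (xor_bits y x) * G x y)"
      have "(\<Sum>s\<in>Ls n. pmf X x * (pmf W s * G x (xor_bits s x))) = (\<Sum>s\<in>Ls n. ?f (xor_bits s x))"
        by (intro sum.cong refl) (use x in \<open>simp add: Ls_def xor_xor\<close>)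
      also have "\<dots> = (\<Sum>s\<in>Ls n. ?f s)" by (rule sum_xor) (use x in \<open>simp add: Ls_def\<close>)
      finally show "(\<Sum>y\<in>Ls n. ?f y) = (\<Sum>s\<in>Ls n. pmf X x * (pmf W s * G x (xor_bits s x)))" by simp
    qed
    also have "\<dots> = (\<Sum>s\<in>Ls n. \<Sum>x\<in>Ls n. pmf X x * (pmf W s * G x (xor_bits s x)))"
      by (rule sum.swap)
    also have "\<dots> = (\<Sum>s\<in>Ls n. pmf W s * (\<Sum>x\<in>Ls n. pmf X x * G x (xor_bits s x)))"
      by (simp add: sum_distrib_left mult_ac)
    finally show ?thesis .
  qed
  have E2: "(\<Sum>x\<in>Ls n. pmf X x * G x (xor_bits s x)) \<le> (\<Sum>u\<in>Ls k0. Q u * \<phi> u s)" if sL: "s \<in> Ls n" for s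
  proof -
    have ls: "length s = n" using sL by (simp add: Ls_def)
    have ss: "s = take k0 s @ drop k0 s" by simp
    have "(\<Sum>x\<in>Ls n. pmf X x * G x (xor_bits s x))
        = (\<Sum>u\<in>Ls k0. \<Sum>v\<in>Ls t. pmf X (u@v) * G (u@v) (xor_bits s (u@v)))"
      unfolding nk by (rule sum_split)
    also have "\<dots> = (\<Sum>u\<in>Ls k0. \<Sum>v\<in>Ls t. Q u / 2^t * G (u@v) (xor_bits (take k0 s) u @ xor_bits (drop k0 s) v))"
    proof (rule sum.cong[OF refl], rule sum.cong[OF refl])
      fix u v assume u: "u \<in> Ls k0" and v: "v \<in> Ls t"
      have "xor_bits s (u@v) = xor_bits (take k0 s @ drop k0 s) (u@v)" by simp
      also have "\<dots> = xor_bits (take k0 s) u @ xor_bits (drop k0 s) v"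
        by (rule xor_append) (use u ls k0n in \<open>auto simp: Ls_def\<close>)
      finally show "pmf X (u@v) * G (u@v) (xor_bits s (u@v))
          = Q u / 2^t * G (u@v) (xor_bits (take k0 s) u @ xor_bits (drop k0 s) v)"
        using pXuv[OF u v] by simp
    qed
    also have "\<dots> \<le> (\<Sum>u\<in>Ls k0. Q u * \<phi> u s)"
    proof (rule sum_mono)
      fix u assume u: "u \<in> Ls k0"
      show "(\<Sum>v\<in>Ls t. Q u / 2^t * G (u@v) (xor_bits (take k0 s) u @ xor_bits (drop k0 s) v)) \<le> Q u * \<phi> u s"
      proof (cases "Q u = 0")
        case True then show ?thesis by simp
      next
        case False
        have gu: "(\<forall>i<2*m. u!i) \<and> u!(2*m) \<noteq> u!(2*m+1)" using good[OF u False] .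
        have lu: "length u = 2*m+2" using u by (simp add: Ls_def k0_def)
        have lsu: "length (take k0 s) = 2*m+2" using ls k0n by (simp add: k0_def)
        have lsv: "length (drop k0 s) = t" using ls by (simp add: t_def)
        have tk: "(\<forall>i<2*m+2. take k0 s ! i \<longleftrightarrow> i = c) \<longleftrightarrow> (\<forall>i<k0. s ! i \<longleftrightarrow> i = c)" for c
          by (simp add: k0_def)
        have vb: "(\<Sum>v\<in>Ls t. G (u@v) (xor_bits (take k0 s) u @ xor_bits (drop k0 s) v)) \<le> 2^t * \<phi> u s"
          using vsum_bound[OF lu conjunct1[OF gu] conjunct2[OF gu] lsu et lsv d0]
          unfolding tk \<phi>_def G_def .
        have q0: "Q u \<ge> 0" unfolding Q_def by simp
        have "(\<Sum>v\<in>Ls t. Q u / 2^t * G (u@v) (xor_bits (take k0 s) u @ xor_bits (drop k0 s) v))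
            = Q u / 2^t * (\<Sum>v\<in>Ls t. G (u@v) (xor_bits (take k0 s) u @ xor_bits (drop k0 s) v))"
          by (simp add: sum_distrib_left)
        also have "\<dots> \<le> Q u / 2^t * (2^t * \<phi> u s)" using vb q0 by (intro mult_left_mono) auto
        also have "\<dots> = Q u * \<phi> u s" by simp
        finally show ?thesis .
      qed
    qed
    finally show ?thesis .
  qed
  have Aeq: "(\<Sum>s\<in>Ls n. pmf W s * (if (\<forall>i<k0. s!i \<longleftrightarrow> i = c) then 1 else 0)) = Pm" if c: "c < k0" for c
  proof -
    have "(\<Sum>s\<in>Ls n. pmf W s * (if (\<forall>i<k0. s!i \<longleftrightarrow> i = c) then 1 else 0))
        = (\<Sum>s\<in>Ls n. if (\<forall>i<k0. s!i \<longleftrightarrow> i = c) then pmf W s else 0)"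
      by (simp only: mult_if01)
    also have "\<dots> = (\<Sum>s\<in>{s\<in>Ls n. \<forall>i<k0. s!i \<longleftrightarrow> i = c}. pmf W s)"
      by (rule sum.inter_filter[symmetric]) simp
    also have "{s\<in>Ls n. \<forall>i<k0. s!i \<longleftrightarrow> i = c} = {s\<in>Ls n. setof s \<inter> {..<k0} = {c}}"
      using setof_cond[OF _ c k0n] by (auto simp: Ls_def)
    also have "(\<Sum>s\<in>{s\<in>Ls n. setof s \<inter> {..<k0} = {c}}. pmf W s) = Pm"
      unfolding Pm_def by (rule mask_sum[OF Wperm c k0n])
    finally show ?thesis .
  qed
  have E3: "(\<Sum>s\<in>Ls n. pmf W s * \<phi> u s) = Pm * (2*\<delta>)" if uL: "u \<in> Ls k0" and qu: "Q u \<noteq> 0" for u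
  proof -
    have gu: "u!(2*m) \<noteq> u!(2*m+1)" using good[OF uL qu] by blast
    define c0 where "c0 = (if u!(2*m) then -(2-\<delta>) else 2 + \<delta>)"
    define c1 where "c1 = (if u!(2*m+1) then -(2-\<delta>) else 2 + \<delta>)"
    have split: "pmf W s * \<phi> u s = c0 * (pmf W s * (if (\<forall>i<k0. s!i \<longleftrightarrow> i = 2*m) then 1 else 0))
        + c1 * (pmf W s * (if (\<forall>i<k0. s!i \<longleftrightarrow> i = 2*m+1) then 1 else 0))" for s
    proof -
      have nb: "\<not> ((\<forall>i<k0. s!i \<longleftrightarrow> i = 2*m) \<and> (\<forall>i<k0. s!i \<longleftrightarrow> i = 2*m+1))"
      proof
        assume h: "(\<forall>i<k0. s!i \<longleftrightarrow> i = 2*m) \<and> (\<forall>i<k0. s!i \<longleftrightarrow> i = 2*m+1)"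
        have "2*m < k0" unfolding k0_def by simp
        then have "s!(2*m) \<longleftrightarrow> 2*m = 2*m" "s!(2*m) \<longleftrightarrow> 2*m = 2*m+1" using h by blast+
        then show False by simp
      qed
      have phi: "\<phi> u s = (if (\<forall>i<k0. s!i \<longleftrightarrow> i = 2*m) then c0 else if (\<forall>i<k0. s!i \<longleftrightarrow> i = 2*m+1) then c1 else 0)"
        by (simp only: \<phi>_def c0_def c1_def)
      show ?thesis unfolding phi by (rule split3[OF nb])
    qed
    have "(\<Sum>s\<in>Ls n. pmf W s * \<phi> u s) = c0 * Pm + c1 * Pm"
      unfolding split sum.distrib sum_distrib_left[symmetric]
      using Aeq[of "2*m"] Aeq[of "2*m+1"] by (simp add: k0_def)
    also have "\<dots> = Pm * (2*\<delta>)" using gu unfolding c0_def c1_def by (cases "u!(2*m)") (auto simp: algebra_simps)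
    finally show ?thesis .
  qed
  have "(\<Sum>s\<in>Ls n. pmf W s * (\<Sum>x\<in>Ls n. pmf X x * G x (xor_bits s x)))
      \<le> (\<Sum>s\<in>Ls n. pmf W s * (\<Sum>u\<in>Ls k0. Q u * \<phi> u s))"
    using E2 by (intro sum_mono mult_left_mono) auto
  also have "\<dots> = (\<Sum>u\<in>Ls k0. Q u * (\<Sum>s\<in>Ls n. pmf W s * \<phi> u s))"
  proof -
    have "(\<Sum>s\<in>Ls n. pmf W s * (\<Sum>u\<in>Ls k0. Q u * \<phi> u s)) = (\<Sum>s\<in>Ls n. \<Sum>u\<in>Ls k0. Q u * (pmf W s * \<phi> u s))"
      by (simp add: sum_distrib_left mult_ac)
    also have "\<dots> = (\<Sum>u\<in>Ls k0. \<Sum>s\<in>Ls n. Q u * (pmf W s * \<phi> u s))" by (rule sum.swap)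
    also have "\<dots> = (\<Sum>u\<in>Ls k0. Q u * (\<Sum>s\<in>Ls n. pmf W s * \<phi> u s))" by (simp add: sum_distrib_left)
    finally show ?thesis .
  qed
  also have "\<dots> = (\<Sum>u\<in>Ls k0. Q u * (Pm * (2*\<delta>)))"
  proof (intro sum.cong refl)
    fix u assume "u \<in> Ls k0"
    then show "Q u * (\<Sum>s\<in>Ls n. pmf W s * \<phi> u s) = Q u * (Pm * (2*\<delta>))"
      using E3[of u] by (cases "Q u = 0") auto
  qed
  also have "\<dots> = Pm * (2*\<delta>)" using sumQ by (simp add: sum_distrib_right[symmetric])
  also have "\<dots> \<le> 2 * \<delta> / real n"
  proof -
    have "Pm \<le> 1 / real n" using Pm_le npos by (simp add: pos_le_divide_eq mult.commute)
    then have "Pm * (2*\<delta>) \<le> 1 / real n * (2*\<delta>)" using d0 by (intro mult_right_mono) auto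
    then show ?thesis by simp
  qed
  finally show ?thesis using E1 by simp
qed

end
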